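(* Let $q$ be a power of $2$, let $b\in\mathbb{F}_q$ with $b\ne0$, and let $n\ge2$ be an integer. Let $r\ge0$ be such that $2^r$ divides $n+1$ but $2^{r+1}$ does not, and let $m\ge0$ be defined by $n+1=2^r(m+1)$. Assume $r\ge1$. If $q>m/2+1$, then there exists $a\in\mathbb{F}_q$ such that $\hat C_n(a,b)$ is LCD.
   Context: For $a,b\in\mathbb{F}_q$ and $n\ge 2$, $\hat T_n(a,b)$ denotes the $n\times n$ symmetric tridiagonal Toeplitz matrix over $\mathbb{F}_q$ with all diagonal entries equal to $a$, all entries on the first super- and sub-diagonals equal to $b$, and all other entries $0$. $\hat C_n(a,b)$ is the $[2n,n]$ linear code over $\mathbb{F}_q$ with generator matrix $[I_n\mid \hat T_n(a,b)]$. A linear code $C$ is LCD if $C\cap C^\perp=\{0\}$ (Euclidean dual). *)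

theory Defs
  imports "Jordan_Normal_Form.Matrix"
begin

definition tridiag_toeplitz :: "nat \<Rightarrow> 'a::field \<Rightarrow> 'a \<Rightarrow> 'a mat" where
  "tridiag_toeplitz n a b = mat n n (\<lambda>(i,j). if i = j then a
       else if i = j + 1 \<or> j = i + 1 then b else 0)"

definition gen_IT :: "nat \<Rightarrow> 'a::field \<Rightarrow> 'a \<Rightarrow> 'a mat" where
  "gen_IT n a b = mat n (2 * n) (\<lambda>(i,j). if j < n then (if i = j then 1 else 0)
       else tridiag_toeplitz n a b $$ (i, j - n))"

text \<open>Linear code generated by G: the row space of G, i.e. all u G for u in F^k.\<close>
definition lin_code :: "'a::field mat \<Rightarrow> 'a vec set" where
  "lin_code G = {mult_mat_vec (transpose_mat G) u | u. u \<in> carrier_vec (dim_row G)}"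

definition dual_code :: "nat \<Rightarrow> 'a::field vec set \<Rightarrow> 'a vec set" where
  "dual_code N C = {y \<in> carrier_vec N. \<forall>x\<in>C. x \<bullet> y = 0}"

definition is_LCD :: "nat \<Rightarrow> 'a::field vec set \<Rightarrow> bool" where
  "is_LCD N C \<longleftrightarrow> C \<inter> dual_code N C = {0\<^sub>v N}"

definition C_hat :: "nat \<Rightarrow> 'a::field \<Rightarrow> 'a \<Rightarrow> 'a vec set" where
  "C_hat n a b = lin_code (gen_IT n a b)"

end

theory Submission
  imports Defs "HOL-Computational_Algebra.Polynomial"
begin



fun F :: "nat \<Rightarrow> 'a::comm_ring_1 \<Rightarrow> 'a" where
  "F 0 x = 0" | "F (Suc 0) x = 1" | "F (Suc (Suc k)) x = x * F (Suc k) x + F k x"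

fun Fp :: "nat \<Rightarrow> 'a::comm_ring_1 poly" where
  "Fp 0 = 0" | "Fp (Suc 0) = 1" | "Fp (Suc (Suc k)) = [:0,1:] * Fp (Suc k) + Fp k"

lemma poly_Fp: "poly (Fp k) x = F k x"
  by (induction k rule: Fp.induct) auto

lemma Fp_deg: "degree (Fp (Suc k) :: 'a::comm_ring_1 poly) = k \<and> coeff (Fp (Suc k) :: 'a poly) k = 1"
proof (induction k rule: nat_less_induct)
  case (1 k)
  show ?case
  proof (cases k)
    case 0 then show ?thesis by simp
  next
    case (Suc l)
    note IH = 1[rule_format, of l]
    have pc: "[:0,1:] * (Fp (Suc l) :: 'a poly) = pCons 0 (Fp (Suc l))" by simp
    have nz: "Fp (Suc l) \<noteq> (0::'a poly)" 
    proof
      assume "Fp (Suc l) = (0::'a poly)"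
      then have "coeff (Fp (Suc l) :: 'a poly) l = 0" by simp
      then show False using IH Suc by simp
    qed
    have d1: "degree ([:0,1:] * (Fp (Suc l) :: 'a poly)) = Suc l" using IH Suc nz unfolding pc
      by (simp add: degree_pCons_eq)
    have c1: "coeff ([:0,1:] * (Fp (Suc l) :: 'a poly)) (Suc l) = 1" using IH Suc by simp
    have d2: "degree (Fp l :: 'a poly) < Suc l"
    proof (cases l)
      case 0 then show ?thesis by simp
    next
      case (Suc l') then show ?thesis using 1[rule_format, of l'] \<open>k = Suc l\<close> by simp
    qed
    have "degree (Fp (Suc k) :: 'a poly) = Suc l" using Suc d1 d2
      by (simp add: degree_add_eq_left)
    moreover have "coeff (Fp (Suc k) :: 'a poly) k = 1" using Suc c1 d2
      by (simp add: coeff_eq_0)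
    ultimately show ?thesis using Suc by simp
  qed
qed

lemma F_add: "F (m + n + 1) x = F (m+1) x * F (n+1) x + F m x * F n x"
proof (induction n rule: nat_less_induct)
  case (1 n)
  show ?case
  proof (cases n)
    case 0 then show ?thesis by simp
  next
    case (Suc n')
    show ?thesis
    proof (cases n')
      case 0 then show ?thesis using Suc by (simp add: algebra_simps)
    next
      case (Suc l)
      have a: "F (Suc (m+l)) x = F (Suc m) x * F (Suc l) x + F m x * F l x"
        using 1 \<open>n = Suc n'\<close> Suc by (metis Suc_eq_plus1 add.right_neutral add_Suc_right lessI less_SucI)
      have b: "F (Suc (Suc (m+l))) x = F (Suc m) x * F (Suc (Suc l)) x + F m x * F (Suc l) x"
        using 1 \<open>n = Suc n'\<close> Suc by (metis Suc_eq_plus1 add_Suc_right lessI)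
      have s1: "F (Suc (Suc (Suc (m+l)))) x = x * F (Suc (Suc (m+l))) x + F (Suc (m+l)) x" by simp
      have s2: "F (Suc (Suc (Suc l))) x = x * F (Suc (Suc l)) x + F (Suc l) x" by simp
      have s3: "F (Suc (Suc l)) x = x * F (Suc l) x + F l x" by simp
      have e: "m + n + 1 = Suc (Suc (Suc (m+l)))" "n + 1 = Suc (Suc (Suc l))" "n = Suc (Suc l)"
        using \<open>n = Suc n'\<close> Suc by auto
      have e2: "m+1 = Suc m" by simp
      have "F (Suc (Suc (Suc (m+l)))) x = x * F (Suc (Suc (m+l))) x + F (Suc (m+l)) x" by (simp only: s1)
      also have "\<dots> = x*(F (Suc m) x * F (Suc (Suc l)) x + F m x * F (Suc l) x) + (F (Suc m) x * F (Suc l) x + F m x * F l x)"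
        by (simp only: a b)
      also have "\<dots> = F (Suc m) x * (x * F (Suc (Suc l)) x + F (Suc l) x) + F m x * (x * F (Suc l) x + F l x)"
        by (simp del: F.simps add: algebra_simps)
      also have "\<dots> = F (Suc m) x * F (Suc (Suc (Suc l))) x + F m x * F (Suc (Suc l)) x"
        by (simp only: s2 s3)
      finally have X: "F (Suc (Suc (Suc (m+l)))) x = F (Suc m) x * F (Suc (Suc (Suc l))) x + F m x * F (Suc (Suc l)) x" .
      show ?thesis by (subst e(1), subst e(2), subst e(3), subst e2, rule X)
    qed
  qed
qed

lemma char2_neg: fixes y :: "'a::field" assumes "(2::'a) = 0" shows "- y = y"
proof -
  have "y + y = 2 * y" by simp
  then have "y + y = 0" using assms by simp
  then show ?thesis by (simp add: add_eq_0_iff)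
qed

lemma F_odd: assumes "(2::'a::field) = 0"
  shows "F (2*k+1) (x::'a) = (F (k+1) x + F k x)^2"
proof -
  have "F (2*k+1) x = F (k+1) x * F (k+1) x + F k x * F k x"
    using F_add[of k k x] by (simp add: mult_2)
  also have "\<dots> = (F (k+1) x + F k x)^2 - 2 * (F (k+1) x * F k x)"
    by (simp add: power2_eq_square algebra_simps)
  finally show ?thesis using assms by simp
qed

lemma F_even: assumes "(2::'a::field) = 0"
  shows "F (2*k) (x::'a) = x * (F k x)^2"
proof (cases k)
  case 0 then show ?thesis by simp
next
  case (Suc l)
  have "F (2*k) x = F (Suc l + l + 1) x" using Suc by (simp add: mult_2)
  also have "\<dots> = F (Suc l + 1) x * F (l+1) x + F (Suc l) x * F l x"
    by (rule F_add)
  also have "\<dots> = x * (F k x)^2 + 2 * (F (Suc l) x * F l x)"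
    using Suc by (simp add: power2_eq_square algebra_simps)
  finally show ?thesis using assms by simp
qed

lemma F_pow2: assumes "(2::'a::field) = 0" "F (2^r * M) (x::'a) = 0"
  shows "x = 0 \<or> F M x = 0"
  using assms(2)
proof (induction r)
  case 0 then show ?case by simp
next
  case (Suc r)
  have "F (2 * (2^r * M)) x = 0" using Suc.prems by (simp add: mult.assoc)
  then have "x * (F (2^r*M) x)^2 = 0" using F_even[OF assms(1)] by metis
  then show ?case using Suc.IH by auto
qed

lemma char2_of_card: assumes "card (UNIV :: 'a::{field,finite} set) = 2^k"
  shows "(2::'a) = 0"
proof -
  have "(\<Sum>y\<in>UNIV. y) = (\<Sum>y\<in>UNIV. y + (1::'a))"
    by (rule sum.reindex_bij_witness[of _ "\<lambda>y. y + 1" "\<lambda>y. y - 1"]) auto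
  also have "\<dots> = (\<Sum>y\<in>UNIV. y) + of_nat (card (UNIV::'a set))"
    by (simp add: sum.distrib)
  finally have "of_nat (card (UNIV::'a set)) = (0::'a)" by simp
  then have "(2::'a)^k = 0" using assms by (metis of_nat_numeral of_nat_power)
  then show ?thesis by (meson power_eq_0_iff)
qed


definition tri :: "nat \<Rightarrow> 'a::field \<Rightarrow> 'a \<Rightarrow> (nat \<Rightarrow> 'a) \<Rightarrow> nat \<Rightarrow> 'a" where
  "tri n a b f i = (if 0 < i then b * f (i-1) else 0) + a * f i + (if i+1 < n then b * f (i+1) else 0)"

lemma c2: fixes p q :: "'a::field" assumes "(2::'a) = 0" "p + q = 0" shows "p = q"
proof -
  have "p = - q" using assms(2) by (simp add: eq_neg_iff_add_eq_0)
  then show ?thesis using char2_neg[OF assms(1)] by simp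
qed

lemma T_idx: "i < n \<Longrightarrow> k < n \<Longrightarrow> tridiag_toeplitz n a b $$ (i,k) =
   (if i = k then a else if i = k + 1 \<or> k = i + 1 then b else 0)"
  unfolding tridiag_toeplitz_def by simp

lemma sum_tri_gen:
  fixes a b :: "'a::field"
  assumes "i < n"
  shows "(\<Sum>k\<in>{0..<n}. (if i = k then a else if i = k + 1 \<or> k = i + 1 then b else 0) * f k) = tri n a b f i"
proof -
  have "(\<Sum>k\<in>{0..<n}. (if i = k then a else if i = k + 1 \<or> k = i + 1 then b else 0) * f k)
     = (\<Sum>k\<in>{0..<n}. (if k = i then a * f k else 0) + (if 0 < i \<and> k = i - 1 then b * f k else 0)
            + (if k = i + 1 then b * f k else 0))"
    by (rule sum.cong) auto
  also have "\<dots> = (\<Sum>k\<in>{0..<n}. if k = i then a * f k else 0) + (\<Sum>k\<in>{0..<n}. if 0 < i \<and> k = i - 1 then b * f k else 0)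
            + (\<Sum>k\<in>{0..<n}. if k = i + 1 then b * f k else 0)"
    by (simp add: sum.distrib)
  also have "(\<Sum>k\<in>{0..<n}. if 0 < i \<and> k = i - 1 then b * f k else 0) = (if 0 < i then b * f (i-1) else 0)"
    using assms by (cases "0 < i") (simp_all add: sum.delta)
  finally show ?thesis using assms unfolding tri_def by (simp add: sum.delta)
qed

lemma sum_T_row: "i < n \<Longrightarrow> (\<Sum>k\<in>{0..<n}. tridiag_toeplitz n a b $$ (i,k) * f k) = tri n a b f i"
  by (subst sum_tri_gen[symmetric], assumption, rule sum.cong) (auto simp: T_idx)

lemma sum_T_col: "i < n \<Longrightarrow> (\<Sum>k\<in>{0..<n}. tridiag_toeplitz n a b $$ (k,i) * f k) = tri n a b f i"
  by (subst sum_tri_gen[symmetric], assumption, rule sum.cong) (auto simp: T_idx)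

lemma tri_zero: "(\<forall>l<n. f l = 0) \<Longrightarrow> i < n \<Longrightarrow> tri n a b f i = 0"
  unfolding tri_def by auto

lemma tri_add: "tri n a b (\<lambda>k. f k + g k) i = tri n a b f i + tri n a b g i"
  unfolding tri_def by (simp add: algebra_simps)

lemma tri_shift: "tri n (a + 1) b f = (\<lambda>k. tri n a b f k + f k)"
  unfolding tri_def by (rule ext) (simp add: algebra_simps)

lemma kernel:
  fixes c b :: "'a::field"
  assumes two: "(2::'a) = 0" and b: "b \<noteq> 0" and npos: "0 < n" and eq: "\<forall>i<n. tri n c b u i = 0"
    and F: "F (n+1) (c/b) \<noteq> 0"
  shows "\<forall>i<n. u i = 0"
proof -
  define x where "x = c / b"
  have cx: "c = x * b" using b unfolding x_def by simp
  have claim: "i < n \<longrightarrow> u i = u 0 * F (i+1) x" for i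
  proof (induction i rule: nat_less_induct)
    case (1 i)
    show ?case
    proof (intro impI)
      assume i: "i < n"
      show "u i = u 0 * F (i+1) x"
      proof (cases i)
        case 0 then show ?thesis by simp
      next
        case (Suc i')
        show ?thesis
        proof (cases i')
          case 0
          have "tri n c b u 0 = 0" using eq i by auto
          then have "c * u 0 + b * u 1 = 0" using i Suc 0 unfolding tri_def by simp
          then have "b * u 1 = c * u 0" using c2[OF two] by (metis add.commute)
          then have "u 1 = x * u 0" using b cx by (metis mult.commute mult.left_commute mult_left_cancel)
          then show ?thesis using Suc 0 by (simp add: mult.commute)
        next
          case (Suc j)
          have ij: "i = j + 2" using Suc \<open>i = Suc i'\<close> by simp
          have "tri n c b u (j+1) = 0" using eq i ij by auto
          then have "b * u j + c * u (j+1) + b * u (j+2) = 0" using i ij unfolding tri_def by simp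
          then have "b * u (j+2) = b * u j + c * u (j+1)" using c2[OF two] by (metis add.commute)
          also have "\<dots> = b * (u j + x * u (j+1))" using cx by (simp add: algebra_simps)
          finally have "u (j+2) = u j + x * u (j+1)" using b by simp
          also have "\<dots> = u 0 * F (j+1) x + x * (u 0 * F (j+2) x)"
          proof -
            have l1: "j < i" "j < n" using ij i by auto
            have h1: "u j = u 0 * F (j+1) x" using 1[rule_format, OF l1] .
            have l2: "j+1 < i" "j+1 < n" using ij i by auto
            have h2: "u (j+1) = u 0 * F (j+1+1) x" using 1[rule_format, OF l2] .
            show ?thesis unfolding h1 h2 by (simp add: numeral_2_eq_2)
          qed
          also have "\<dots> = u 0 * F (j+3) x" by (simp add: numeral_3_eq_3 numeral_2_eq_2 algebra_simps)
          finally show ?thesis using ij by (simp add: numeral_3_eq_3)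
        qed
      qed
    qed
  qed
  have u0: "u 0 = 0"
  proof -
    obtain n' where Suc: "n = Suc n'" using npos by (cases n) auto
    show ?thesis
    proof (cases n')
      case 0
      have "tri n c b u 0 = 0" using eq Suc by auto
      then have "c * u 0 = 0" using Suc 0 unfolding tri_def by simp
      then have "u 0 * (x * b) = 0" using cx by (simp add: mult.commute)
      moreover have "F (n+1) x = x" using Suc 0 by simp
      ultimately show ?thesis using F b x_def by auto
    next
      case (Suc j)
      have nj: "n = j + 2" using Suc \<open>n = Suc n'\<close> by simp
      have "tri n c b u (j+1) = 0" using eq nj by auto
      then have "b * u j + c * u (j+1) = 0" using nj unfolding tri_def by simp
      then have "b * (u 0 * F (j+1) x) + x * b * (u 0 * F (j+2) x) = 0"
        using claim[of j] claim[of "j+1"] nj cx by simp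
      then have "b * u 0 * (F (j+1) x + x * F (j+2) x) = 0" by (simp add: algebra_simps)
      moreover have "F (n+1) x = F (j+1) x + x * F (j+2) x" using nj
        by (simp add: numeral_3_eq_3 numeral_2_eq_2 algebra_simps)
      ultimately show ?thesis using F b x_def by auto
    qed
  qed
  show ?thesis using claim u0 by auto
qed


lemma gen_dims[simp]: "dim_row (gen_IT n a b) = n" "dim_col (gen_IT n a b) = 2 * n"
  unfolding gen_IT_def by auto

lemma gen_idx: "i < n \<Longrightarrow> j < 2 * n \<Longrightarrow> gen_IT n a b $$ (i,j) =
  (if j < n then (if i = j then 1 else 0) else tridiag_toeplitz n a b $$ (i, j - n))"
  unfolding gen_IT_def by simp

lemma sum_split2: "(\<Sum>j\<in>{0..<2*n}. (f::nat \<Rightarrow> 'a::comm_monoid_add) j) = (\<Sum>j\<in>{0..<n}. f j) + (\<Sum>k\<in>{0..<n}. f (n + k))"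
proof -
  have "(\<Sum>j\<in>{0..<2*n}. f j) = (\<Sum>j\<in>{0..<n}. f j) + (\<Sum>j\<in>{n..<2*n}. f j)"
    by (rule sum.atLeastLessThan_concat[symmetric]) auto
  moreover have "(\<Sum>j\<in>{n..<2*n}. f j) = (\<Sum>k\<in>{0..<n}. f (n + k))"
    using sum.shift_bounds_nat_ivl[of f 0 n n] by (simp add: mult_2 add.commute)
  ultimately show ?thesis by simp
qed

lemma codeword_idx:
  fixes a b :: "'a::field"
  assumes u: "u \<in> carrier_vec n" and j: "j < 2 * n"
  shows "(transpose_mat (gen_IT n a b) *\<^sub>v u) $ j =
     (if j < n then u $ j else tri n a b (\<lambda>i. u $ i) (j - n))"
proof -
  have "(transpose_mat (gen_IT n a b) *\<^sub>v u) $ j = (\<Sum>i\<in>{0..<n}. gen_IT n a b $$ (i,j) * u $ i)"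
    using u j by (simp add: scalar_prod_def)
  also have "\<dots> = (if j < n then u $ j else tri n a b (\<lambda>i. u $ i) (j - n))"
  proof (cases "j < n")
    case True
    have "(\<Sum>i\<in>{0..<n}. gen_IT n a b $$ (i,j) * u $ i) = (\<Sum>i\<in>{0..<n}. if i = j then u $ i else 0)"
      by (rule sum.cong) (use True j in \<open>auto simp: gen_idx\<close>)
    then show ?thesis using True by (simp add: sum.delta')
  next
    case False
    have "(\<Sum>i\<in>{0..<n}. gen_IT n a b $$ (i,j) * u $ i) = (\<Sum>i\<in>{0..<n}. tridiag_toeplitz n a b $$ (i, j - n) * u $ i)"
      by (rule sum.cong) (use False j in \<open>auto simp: gen_idx\<close>)
    also have "\<dots> = tri n a b (\<lambda>i. u $ i) (j - n)" using False j by (intro sum_T_col) auto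
    finally show ?thesis using False by simp
  qed
  finally show ?thesis .
qed

lemma unit_codeword_idx:
  fixes a b :: "'a::field"
  assumes i: "i < n" and j: "j < 2 * n"
  shows "(transpose_mat (gen_IT n a b) *\<^sub>v unit_vec n i) $ j = gen_IT n a b $$ (i,j)"
proof -
  have "(transpose_mat (gen_IT n a b) *\<^sub>v unit_vec n i) $ j = (\<Sum>l\<in>{0..<n}. gen_IT n a b $$ (l,j) * unit_vec n i $ l)"
    using j by (simp add: scalar_prod_def)
  also have "\<dots> = (\<Sum>l\<in>{0..<n}. if l = i then gen_IT n a b $$ (l,j) else 0)"
    by (rule sum.cong) (use i in auto)
  finally show ?thesis using i by (simp add: sum.delta')
qed

lemma zero_codeword:
  fixes a b :: "'a::field"
  assumes u: "u \<in> carrier_vec n" and z: "\<forall>i<n. u $ i = 0"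
  shows "transpose_mat (gen_IT n a b) *\<^sub>v u = 0\<^sub>v (2*n)"
proof (rule eq_vecI)
  fix j assume "j < dim_vec (0\<^sub>v (2*n) :: 'a vec)"
  then have j: "j < 2*n" by simp
  show "(transpose_mat (gen_IT n a b) *\<^sub>v u) $ j = 0\<^sub>v (2*n) $ j"
    using codeword_idx[OF u j, of a b] z j tri_zero[of n "\<lambda>i. u $ i" "j - n" a b] by auto
qed simp

theorem corollary2p5:
  fixes b :: "'a::{field,finite}" and n r m :: nat
  assumes "\<exists>k. card (UNIV :: 'a set) = 2 ^ k"
    and "b \<noteq> 0"
    and "n \<ge> 2"
    and "2 ^ r dvd n + 1" and "\<not> 2 ^ (r + 1) dvd n + 1"
    and "n + 1 = 2 ^ r * (m + 1)"
    and "r \<ge> 1"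
    and "real (card (UNIV :: 'a set)) > real m / 2 + 1"
  shows "\<exists>a::'a. is_LCD (2 * n) (C_hat n a b)"
proof -
  obtain k where k: "card (UNIV :: 'a set) = 2 ^ k" using assms(1) by blast
  have two: "(2::'a) = 0" using char2_of_card[OF k] .
  have "odd (m + 1)"
  proof
    assume "even (m+1)"
    then obtain t where "m + 1 = 2 * t" by blast
    then have "n + 1 = 2 ^ (r+1) * t" using assms(6) by simp
    then show False using assms(5) by simp
  qed
  then obtain j where mj: "m = 2 * j" by (metis add_right_imp_eq evenE odd_add odd_one)
  define G :: "'a poly" where "G = Fp (Suc j) + Fp j"
  have degj: "degree (Fp j :: 'a poly) < j \<or> Fp j = (0::'a poly)"
  proof (cases j)
    case 0 then show ?thesis by simp
  next
    case (Suc j') then show ?thesis using Fp_deg[of j', where 'a='a] by simp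
  qed
  have cG: "coeff G j = 1" unfolding G_def using Fp_deg[of j, where 'a='a] degj
    by (auto simp: coeff_eq_0)
  have G0: "G \<noteq> 0" using cG by auto
  have dG: "degree G \<le> j" unfolding G_def using Fp_deg[of j, where 'a='a] degj
    by (intro degree_add_le) auto
  have bad: "{x::'a. F (n+1) x = 0} \<subseteq> insert 0 {x. poly G x = 0}"
  proof
    fix x :: 'a assume "x \<in> {x. F (n+1) x = 0}"
    then have "F (2^r * (m+1)) x = 0" using assms(6) by simp
    then have "x = 0 \<or> F (m+1) x = 0" using F_pow2[OF two] by blast
    moreover have "F (m+1) x = (poly G x)^2"
      unfolding G_def mj using F_odd[OF two, of j x] by (simp add: poly_Fp)
    ultimately show "x \<in> insert 0 {x. poly G x = 0}" by auto
  qed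
  have "card {x::'a. F (n+1) x = 0} \<le> card (insert 0 {x. poly G x = 0})"
    by (rule card_mono) (use bad in auto)
  also have "\<dots> \<le> Suc (card {x. poly G x = 0})" by (rule card_insert_le_m1) auto
  also have "\<dots> \<le> Suc j" using card_poly_roots_bound[OF G0] dG by simp
  also have "\<dots> < card (UNIV :: 'a set)" using assms(8) mj by simp
  finally have "{x::'a. F (n+1) x = 0} \<noteq> UNIV" by auto
  then obtain x :: 'a where Fx: "F (n+1) x \<noteq> 0" by auto
  define c where "c = x * b"
  define a where "a = c - 1"
  have ca: "c = a + 1" unfolding a_def by simp
  have cb: "c / b = x" unfolding c_def using assms(2) by simp
  have npos: "0 < n" using assms(3) by simp
  let ?G = "gen_IT n a b"
  have LCD: "lin_code ?G \<inter> dual_code (2*n) (lin_code ?G) = {0\<^sub>v (2*n)}"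
  proof
    show "lin_code ?G \<inter> dual_code (2*n) (lin_code ?G) \<subseteq> {0\<^sub>v (2*n)}"
    proof
      fix w assume w: "w \<in> lin_code ?G \<inter> dual_code (2*n) (lin_code ?G)"
      then obtain u where u: "u \<in> carrier_vec n" and wu: "w = transpose_mat ?G *\<^sub>v u"
        unfolding lin_code_def by auto
      define U where "U = (\<lambda>i. u $ i)"
      have dw: "dim_vec w = 2 * n" using wu by simp
      have wj: "w $ j = (if j < n then U j else tri n a b U (j - n))" if "j < 2 * n" for j
        unfolding wu U_def by (rule codeword_idx[OF u that])
      have eqs: "U i + tri n a b (tri n a b U) i = 0" if i: "i < n" for i
      proof -
        have "transpose_mat ?G *\<^sub>v unit_vec n i \<in> lin_code ?G"
          unfolding lin_code_def by auto
        then have "(transpose_mat ?G *\<^sub>v unit_vec n i) \<bullet> w = 0"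
          using w unfolding dual_code_def by auto
        moreover have "(transpose_mat ?G *\<^sub>v unit_vec n i) \<bullet> w = (\<Sum>j\<in>{0..<2*n}. ?G $$ (i,j) * w $ j)"
          unfolding scalar_prod_def dw
        proof (rule sum.cong)
          fix j assume "j \<in> {0..<2*n}"
          then show "(transpose_mat ?G *\<^sub>v unit_vec n i) $ j * w $ j = ?G $$ (i,j) * w $ j"
            using unit_codeword_idx[OF i, of j a b] by simp
        qed simp
        ultimately have "(\<Sum>j\<in>{0..<2*n}. ?G $$ (i,j) * w $ j) = 0" by simp
        then have "(\<Sum>j\<in>{0..<n}. ?G $$ (i,j) * w $ j) + (\<Sum>l\<in>{0..<n}. ?G $$ (i,n+l) * w $ (n+l)) = 0"
          by (simp add: sum_split2)
        moreover have "(\<Sum>j\<in>{0..<n}. ?G $$ (i,j) * w $ j) = U i"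
        proof -
          have "(\<Sum>j\<in>{0..<n}. ?G $$ (i,j) * w $ j) = (\<Sum>j\<in>{0..<n}. if j = i then U j else 0)"
            by (rule sum.cong) (use i in \<open>auto simp: gen_idx wj\<close>)
          then show ?thesis using i by (simp add: sum.delta)
        qed
        moreover have "(\<Sum>l\<in>{0..<n}. ?G $$ (i,n+l) * w $ (n+l)) = tri n a b (tri n a b U) i"
        proof -
          have "(\<Sum>l\<in>{0..<n}. ?G $$ (i,n+l) * w $ (n+l)) = (\<Sum>l\<in>{0..<n}. tridiag_toeplitz n a b $$ (i,l) * tri n a b U l)"
            by (rule sum.cong) (use i in \<open>auto simp: gen_idx wj\<close>)
          also have "\<dots> = tri n a b (tri n a b U) i" using i by (rule sum_T_row)
          finally show ?thesis .
        qed
        ultimately show ?thesis by simp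
      qed
      define W where "W = tri n c b U"
      have W: "W = (\<lambda>k. tri n a b U k + U k)" unfolding W_def ca by (rule tri_shift)
      have Wz: "tri n c b W i = 0" if i: "i < n" for i
      proof -
        have "tri n c b W i = tri n a b W i + W i" unfolding ca tri_shift by simp
        also have "\<dots> = tri n a b (tri n a b U) i + tri n a b U i + (tri n a b U i + U i)"
          unfolding W tri_add by simp
        also have "\<dots> = (U i + tri n a b (tri n a b U) i) + 2 * tri n a b U i"
          by (simp only: mult_2 add.assoc add.left_commute add.commute)
        also have "\<dots> = 0" using eqs[OF i] two by simp
        finally show ?thesis .
      qed
      have W0: "\<forall>i<n. W i = 0" by (rule kernel[OF two assms(2) npos]) (use Wz Fx cb in auto)
      have "\<forall>i<n. U i = 0" by (rule kernel[OF two assms(2) npos]) (use W0 Fx cb W_def in auto)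
      then have "w = 0\<^sub>v (2*n)" unfolding wu using zero_codeword[OF u] U_def by auto
      then show "w \<in> {0\<^sub>v (2*n)}" by simp
    qed
  next
    have z: "0\<^sub>v (2*n) \<in> lin_code ?G"
    proof -
      have "transpose_mat ?G *\<^sub>v 0\<^sub>v n = 0\<^sub>v (2*n)" by (rule zero_codeword) auto
      moreover have "(0\<^sub>v n :: 'a vec) \<in> carrier_vec (dim_row ?G)" by simp
      ultimately show ?thesis unfolding lin_code_def mem_Collect_eq
        by (intro exI[of _ "0\<^sub>v n :: 'a vec"]) simp
    qed
    moreover have "0\<^sub>v (2*n) \<in> dual_code (2*n) (lin_code ?G)"
      unfolding dual_code_def by (auto simp: scalar_prod_def)
    ultimately show "{0\<^sub>v (2*n)} \<subseteq> lin_code ?G \<inter> dual_code (2*n) (lin_code ?G)" by auto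
  qed
  show ?thesis unfolding is_LCD_def C_hat_def using LCD by blast
qed

end
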